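(* Let $X$ be a Fréchet space and $(\|\cdot\|_k)_{k\ge 1}$ an associated increasing family of seminorms (i.e. $\|x\|_k\le\|x\|_{k+1}$ for all $x\in X$, $k\ge1$). Equip $X$ with the metric \[ d_X(x,y)=\sum_{k=1}^{\infty}2^{-k}\min\bigl(1,\|x-y\|_k\bigr). \] A linear operator $T:X\to X$ is an isometry for $d_X$ (i.e. $d_X(Tx,Ty)=d_X(x,y)$ for all $x,y\in X$) if and only if $\|Tx\|_k=\|x\|_k$ for all $x\in X$ and all $k\in\mathbb{N}$. *)

theory Defs
  imports "HOL-Analysis.Analysis"
begin

definition seminorm :: "('a::real_vector \<Rightarrow> real) \<Rightarrow> bool" where
  "seminorm q \<longleftrightarrow> (\<forall>x y. q (x + y) \<le> q x + q y) \<and> (\<forall>c x. q (c *\<^sub>R x) = \<bar>c\<bar> * q x)"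

text \<open>The metric d_X associated with the seminorm family; index k (from 0) here
  corresponds to the paper's seminorm number k+1, weight 2^-(k+1).\<close>
definition frechet_dist :: "(nat \<Rightarrow> 'a::real_vector \<Rightarrow> real) \<Rightarrow> 'a \<Rightarrow> 'a \<Rightarrow> real" where
  "frechet_dist p x y = (\<Sum>k. (1/2) ^ Suc k * min 1 (p k (x - y)))"

definition frechet_seminorms :: "(nat \<Rightarrow> 'a::real_vector \<Rightarrow> real) \<Rightarrow> bool" where
  "frechet_seminorms p \<longleftrightarrow>
     (\<forall>k. seminorm (p k)) \<and>
     (\<forall>k x. p k x \<le> p (Suc k) x) \<and>
     (\<forall>x. (\<forall>k. p k x = 0) \<longrightarrow> x = 0) \<and>
     (\<forall>f :: nat \<Rightarrow> 'a.
        (\<forall>e>0. \<exists>N. \<forall>m\<ge>N. \<forall>n\<ge>N. frechet_dist p (f m) (f n) < e) \<longrightarrow>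
        (\<exists>x. (\<lambda>n. frechet_dist p (f n) x) \<longlonglongrightarrow> 0))"

end

theory Submission
  imports Defs
begin

lemma key:
  fixes a b :: "nat \<Rightarrow> real"
  assumes mb: "\<And>j. b j \<le> b (Suc j)" and an: "\<And>j. a j \<ge> 0"
    and eq: "\<And>j. j < k \<Longrightarrow> a j = b j" and lt: "a k < b k" and bp: "b k > 0"
  shows "(\<Sum>j. (1/2::real) ^ Suc j * min 1 (a j / b k)) < (\<Sum>j. (1/2) ^ Suc j * min 1 (b j / b k))"
proof -
  define f where "f = (\<lambda>j. (1/2::real) ^ Suc j * min 1 (a j / b k))"
  define g where "g = (\<lambda>j. (1/2::real) ^ Suc j * min 1 (b j / b k))"
  have bn: "b j \<ge> 0" for j
  proof (cases "j < k")
    case True then show ?thesis using eq[OF True] an[of j] by simp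
  next
    case False then have "b k \<le> b j" using lift_Suc_mono_le[of b, OF mb] by simp
    then show ?thesis using bp by simp
  qed
  have geo: "summable (\<lambda>j. (1/2::real) ^ Suc j)" by simp
  have bnd: "norm ((1/2::real) ^ Suc j * min 1 y) \<le> (1/2) ^ Suc j" if "y \<ge> 0" for j y
  proof -
    have "norm ((1/2::real) ^ Suc j * min 1 y) = (1/2) ^ Suc j * min 1 y"
      using that by (simp add: abs_mult)
    also have "\<dots> \<le> (1/2) ^ Suc j * 1" by (rule mult_left_mono) auto
    finally show ?thesis by simp
  qed
  have sf: "summable f" unfolding f_def
    by (rule summable_comparison_test[OF _ geo]) (use bnd an bp in auto)
  have sg: "summable g" unfolding g_def
    by (rule summable_comparison_test[OF _ geo]) (use bnd bn bp in auto)
  have le: "f j \<le> g j" for j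
  proof (cases "j < k")
    case True then show ?thesis using eq[OF True] unfolding f_def g_def by simp
  next
    case False then have "b k \<le> b j" using lift_Suc_mono_le[of b, OF mb] by simp
    then have "min 1 (b j / b k) = 1" using bp by simp
    then show ?thesis unfolding f_def g_def by (simp add: mult_left_mono)
  qed
  have "a k / b k < 1" using lt bp by simp
  then have "min 1 (a k / b k) < min 1 (b k / b k)" using bp by simp
  then have "f k < g k" unfolding f_def g_def by (rule mult_strict_left_mono) simp
  have "0 < suminf (\<lambda>j. g j - f j)"
    using suminf_pos_iff[of "\<lambda>j. g j - f j"] summable_diff[OF sg sf] le \<open>f k < g k\<close> by force
  then show ?thesis using suminf_diff[OF sg sf] unfolding f_def g_def by simp
qed

lemma semi_basic:
  assumes "seminorm q"
  shows "q ((c::real) *\<^sub>R x) = \<bar>c\<bar> * q x" and "q x \<ge> 0"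
proof -
  show sc: "q (c *\<^sub>R x) = \<bar>c\<bar> * q x" for c using assms unfolding seminorm_def by blast
  have "q (x + (-1) *\<^sub>R x) \<le> q x + q ((-1) *\<^sub>R x)" using assms unfolding seminorm_def by blast
  moreover have "q (x + (-1) *\<^sub>R x) = 0" using sc[of 0] by simp
  ultimately show "q x \<ge> 0" using sc[of "-1"] by simp
qed

lemma dir:
  fixes p :: "nat \<Rightarrow> 'a::real_vector \<Rightarrow> real"
  assumes fs: "frechet_seminorms p"
    and D: "\<And>c. frechet_dist p (c *\<^sub>R u) 0 = frechet_dist p (c *\<^sub>R v) 0"
    and eq: "\<And>j. j < k \<Longrightarrow> p j u = p j v" and lt: "p k u < p k v"
  shows False
proof -
  have sn: "\<And>j. seminorm (p j)" and mono: "\<And>j z. p j z \<le> p (Suc j) z"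
    using fs unfolding frechet_seminorms_def by auto
  have bp: "p k v > 0" using lt semi_basic(2)[OF sn, of k u] by simp
  define c where "c = 1 / p k v"
  have cp: "c > 0" using bp c_def by simp
  have "\<And>z. frechet_dist p (c *\<^sub>R z) 0 = (\<Sum>j. (1/2) ^ Suc j * min 1 (p j z / p k v))"
    unfolding frechet_dist_def using semi_basic(1)[OF sn] cp by (simp add: c_def)
  then have "(\<Sum>j. (1/2::real) ^ Suc j * min 1 (p j u / p k v)) = (\<Sum>j. (1/2) ^ Suc j * min 1 (p j v / p k v))"
    using D[of c] by simp
  moreover have "(\<Sum>j. (1/2::real) ^ Suc j * min 1 (p j u / p k v)) < (\<Sum>j. (1/2) ^ Suc j * min 1 (p j v / p k v))"
    by (rule key[where b="\<lambda>j. p j v" and a="\<lambda>j. p j u"])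
       (auto simp: mono semi_basic(2)[OF sn] eq lt bp)
  ultimately show False by simp
qed

theorem lemma1p1:
  fixes p :: "nat \<Rightarrow> 'a::real_vector \<Rightarrow> real" and T :: "'a \<Rightarrow> 'a"
  assumes "frechet_seminorms p"
    and "linear T"
  shows "(\<forall>x y. frechet_dist p (T x) (T y) = frechet_dist p x y)
         \<longleftrightarrow> (\<forall>x k. p k (T x) = p k x)"
proof
  assume iso: "\<forall>x y. frechet_dist p (T x) (T y) = frechet_dist p x y"
  have T0: "T 0 = 0" using assms(2) linear_0 by blast
  have D: "frechet_dist p (c *\<^sub>R T x) 0 = frechet_dist p (c *\<^sub>R x) 0" for c x
    using iso[rule_format, of "c *\<^sub>R x" 0] T0 linear_scale[OF assms(2)] by simp
  show "\<forall>x k. p k (T x) = p k x"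
  proof (rule ccontr)
    assume "\<not> (\<forall>x k. p k (T x) = p k x)"
    then obtain x k where "p k (T x) \<noteq> p k x" by blast
    then have ex: "\<exists>k. p k (T x) \<noteq> p k x" by blast
    define m where "m = (LEAST k. p k (T x) \<noteq> p k x)"
    have ne: "p m (T x) \<noteq> p m x" using LeastI_ex[OF ex] m_def by simp
    have eqs: "\<And>j. j < m \<Longrightarrow> p j (T x) = p j x" using not_less_Least m_def by blast
    show False
    proof (cases "p m (T x) < p m x")
      case True
      show False by (rule dir[OF assms(1), of "T x" x m, OF D eqs True])
    next
      case False
      then have "p m x < p m (T x)" using ne by simp
      show False by (rule dir[OF assms(1), of x "T x" m, OF D[symmetric]])
        (use eqs \<open>p m x < p m (T x)\<close> in auto)
    qed
  qed
next
  assume "\<forall>x k. p k (T x) = p k x"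
  then show "\<forall>x y. frechet_dist p (T x) (T y) = frechet_dist p x y"
    unfolding frechet_dist_def by (simp add: linear_diff[OF assms(2), symmetric])
qed

end
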